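(* There is an absolute constant $c$ such that the following holds. Let $G=(V,E)$ be a graph with $n$ vertices, $m$ edges and degeneracy $d$, let $\mathcal{C}=\{C_\ell\}_{\ell\in I}$ be an LA-succinct clique cover of $G$, and let $\mathcal{A}=\{A_v\}_{v\in V}$ and $\mathcal{D}=\{D_\ell\}_{\ell\in I}$ be its admissibility sets and admissibility duals. Then $$\|\mathcal{A}\|=\|\mathcal{D}\|\le c\cdot\min\{|\mathcal{C}|\,n,\ d\,m\}.$$
   Context: All graphs are finite, simple, undirected, with no isolated vertices; $n=|V|$, $m=|E|$; $N(v)$ open neighbourhood, $N[v]=N(v)\cup\{v\}$. Degeneracy $d:=\max_H\delta_H$ over subgraphs $H$ of $G$ ($\delta_H$ minimum degree). A clique is a vertex set inducing a complete subgraph. $\|\mathcal{F}\|:=\sum_{F\in\mathcal{F}}|F|$. A clique cover is an indexed family of cliques covering every edge. LA-succinct construction: maintain a family $\mathcal{C}$ of cliques of $G$, initially empty; an edge is uncovered if it is contained in no member. Update rule on an uncovered edge $\{u,v\}$: (1) if some $C_\ell\in\mathcal{C}$ has $C_\ell\cup\{u,v\}$ a clique of $G$, choose exactly one such $C_\ell$ and replace it by $C_\ell\cup\{u,v\}$; (2) otherwise add a new member $\{u,v\}$ with a new label. Step (1) is always applied when applicable. An LA-succinct clique cover is a clique cover of $G$ obtained from the empty family by repeatedly applying this rule to uncovered edges. For a clique cover $\{C_\ell\}_{\ell\in I}$: admissibility sets $A_v:=\{\ell\in I: C_\ell\subseteq N[v]\}$ for $v\in V$; admissibility duals $D_\ell:=\{v\in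 V: C_\ell\subseteq N[v]\}$ for $\ell\in I$. *)

theory Defs
  imports Complex_Main
begin

text \<open>Simple graphs on a finite vertex set V (vertices are naturals, so that the
  constant c is uniform over all graphs); edges are 2-element subsets of V.\<close>

definition graph :: "nat set \<Rightarrow> nat set set \<Rightarrow> bool" where
  "graph V E \<longleftrightarrow> finite V
     \<and> (\<forall>e\<in>E. \<exists>u v. u \<noteq> v \<and> u \<in> V \<and> v \<in> V \<and> e = {u, v})
     \<and> (\<forall>v\<in>V. \<exists>e\<in>E. v \<in> e)"

definition nbhd :: "nat set set \<Rightarrow> nat \<Rightarrow> nat set" where
  "nbhd E v = {u. {u, v} \<in> E}"

definition cnbhd :: "nat set set \<Rightarrow> nat \<Rightarrow> nat set" where
  "cnbhd E v = insert v (nbhd E v)"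

definition min_degree :: "nat set \<Rightarrow> nat set set \<Rightarrow> nat" where
  "min_degree W F = Min ((\<lambda>w. card {e\<in>F. w \<in> e}) ` W)"

definition degeneracy :: "nat set \<Rightarrow> nat set set \<Rightarrow> nat" where
  "degeneracy V E = Max {min_degree W F | W F. W \<noteq> {} \<and> W \<subseteq> V \<and> F \<subseteq> E
                                              \<and> (\<forall>e\<in>F. e \<subseteq> W)}"

definition is_clique :: "nat set \<Rightarrow> nat set set \<Rightarrow> nat set \<Rightarrow> bool" where
  "is_clique V E K \<longleftrightarrow> K \<subseteq> V \<and> (\<forall>x\<in>K. \<forall>y\<in>K. x \<noteq> y \<longrightarrow> {x, y} \<in> E)"

text \<open>Indexed families of cliques are lists; the labels are the positions.\<close>
definition uncovered :: "nat set set \<Rightarrow> nat set list \<Rightarrow> nat \<Rightarrow> nat \<Rightarrow> bool" where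
  "uncovered E Cs u v \<longleftrightarrow> u \<noteq> v \<and> {u, v} \<in> E \<and> (\<forall>K\<in>set Cs. \<not> {u, v} \<subseteq> K)"

definition la_step :: "nat set \<Rightarrow> nat set set \<Rightarrow> nat set list \<Rightarrow> nat set list \<Rightarrow> bool" where
  "la_step V E Cs Cs' \<longleftrightarrow> (\<exists>u v. uncovered E Cs u v \<and>
     ((\<exists>l < length Cs. is_clique V E (Cs ! l \<union> {u, v}) \<and> Cs' = Cs[l := Cs ! l \<union> {u, v}])
      \<or> ((\<forall>l < length Cs. \<not> is_clique V E (Cs ! l \<union> {u, v})) \<and> Cs' = Cs @ [{u, v}])))"

definition is_clique_cover :: "nat set \<Rightarrow> nat set set \<Rightarrow> nat set list \<Rightarrow> bool" where
  "is_clique_cover V E Cs \<longleftrightarrow> (\<forall>K\<in>set Cs. is_clique V E K) \<and> (\<forall>e\<in>E. \<exists>K\<in>set Cs. e \<subseteq> K)"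

definition la_succinct_cover :: "nat set \<Rightarrow> nat set set \<Rightarrow> nat set list \<Rightarrow> bool" where
  "la_succinct_cover V E Cs \<longleftrightarrow> (la_step V E)\<^sup>*\<^sup>* [] Cs \<and> is_clique_cover V E Cs"

definition adm_set :: "nat set set \<Rightarrow> nat set list \<Rightarrow> nat \<Rightarrow> nat set" where
  "adm_set E Cs v = {l. l < length Cs \<and> Cs ! l \<subseteq> cnbhd E v}"

definition adm_dual :: "nat set \<Rightarrow> nat set set \<Rightarrow> nat set list \<Rightarrow> nat \<Rightarrow> nat set" where
  "adm_dual V E Cs l = {v\<in>V. Cs ! l \<subseteq> cnbhd E v}"

end

theory Submission
  imports Defs
begin

definition EW :: "nat set set \<Rightarrow> nat set \<Rightarrow> nat set set" where
  "EW E W = {e\<in>E. e \<subseteq> W}"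

definition ZZ :: "nat set set \<Rightarrow> nat set \<Rightarrow> nat set \<Rightarrow> nat set" where
  "ZZ E W e = {z\<in>W. \<forall>a\<in>e. {a,z}\<in>E}"

definition SS :: "nat set set \<Rightarrow> nat set \<Rightarrow> (nat set \<times> nat) set" where
  "SS E W = Sigma (EW E W) (ZZ E W)"

lemma graph_finE: "graph V E \<Longrightarrow> finite E"
proof -
  assume g: "graph V E"
  have "E \<subseteq> Pow V" using g unfolding graph_def by fastforce
  moreover have "finite V" using g graph_def by blast
  ultimately show ?thesis by (meson finite_Pow_iff finite_subset)
qed

lemma graph_finV: "graph V E \<Longrightarrow> finite V"
  unfolding graph_def by (elim conjE)

lemma graph_edge: "graph V E \<Longrightarrow> e \<in> E \<Longrightarrow> \<exists>u v. u \<noteq> v \<and> u \<in> V \<and> v \<in> V \<and> e = {u, v}"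
  unfolding graph_def by blast

lemma graph_noloop: "graph V E \<Longrightarrow> {a,a} \<notin> E"
  using graph_edge by fastforce

lemma deg_fin: "graph V E \<Longrightarrow> finite {min_degree W F | W F. W \<noteq> {} \<and> W \<subseteq> V \<and> F \<subseteq> E \<and> (\<forall>e\<in>F. e \<subseteq> W)}"
proof -
  assume g: "graph V E"
  have "{min_degree W F | W F. W \<noteq> {} \<and> W \<subseteq> V \<and> F \<subseteq> E \<and> (\<forall>e\<in>F. e \<subseteq> W)}
        \<subseteq> (\<lambda>(W,F). min_degree W F) ` (Pow V \<times> Pow E)" by auto
  moreover have "finite V" using g graph_def by blast
  moreover have "finite E" using g graph_finE by blast
  ultimately show ?thesis by (meson finite_Pow_iff finite_SigmaI finite_imageI finite_subset)
qed

lemma deg_le: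
  assumes g: "graph V E" and W: "W \<subseteq> V" "W \<noteq> {}" and F: "F \<subseteq> E" "\<forall>e\<in>F. e \<subseteq> W"
  shows "min_degree W F \<le> degeneracy V E"
proof -
  let ?M = "{min_degree W F | W F. W \<noteq> {} \<and> W \<subseteq> V \<and> F \<subseteq> E \<and> (\<forall>e\<in>F. e \<subseteq> W)}"
  have "min_degree W F \<in> ?M"
    using W F by (intro CollectI exI[of _ W] exI[of _ F]) simp
  from Max_ge[OF deg_fin[OF g] this] show ?thesis unfolding degeneracy_def .
qed

lemma deg_low:
  assumes g: "graph V E" and W: "W \<subseteq> V" "W \<noteq> {}"
  shows "\<exists>w\<in>W. card {e\<in>EW E W. w \<in> e} \<le> degeneracy V E"
proof -
  have fW: "finite W" using graph_finV[OF g] W(1) by (rule finite_subset[rotated])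
  have le: "min_degree W (EW E W) \<le> degeneracy V E"
    by (rule deg_le[OF g W]) (auto simp: EW_def)
  have fi: "finite ((\<lambda>w. card {e\<in>EW E W. w \<in> e}) ` W)" using fW by (rule finite_imageI)
  have ne: "(\<lambda>w. card {e\<in>EW E W. w \<in> e}) ` W \<noteq> {}" using W(2) by simp
  have "min_degree W (EW E W) \<in> (\<lambda>w. card {e\<in>EW E W. w \<in> e}) ` W"
    unfolding min_degree_def by (rule Min_in[OF fi ne])
  then obtain w where "w\<in>W" "min_degree W (EW E W) = card {e\<in>EW E W. w \<in> e}" by (rule imageE) simp
  thus ?thesis using le by auto
qed

lemma deg_pos:
  assumes g: "graph V E" and e: "e \<in> E"
  shows "1 \<le> degeneracy V E"
proof -
  obtain u v where uv: "u \<noteq> v" "u \<in> V" "v \<in> V" "e = {u,v}" using graph_edge[OF g e] by blast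
  have c1: "card {e'\<in>{e}. w \<in> e'} = 1" if "w \<in> e" for w
  proof -
    have "{e'\<in>{e}. w \<in> e'} = {e}" using that by blast
    thus ?thesis by simp
  qed
  have "(\<lambda>w. card {e'\<in>{e}. w \<in> e'}) ` e = {1}" using c1 uv by auto
  hence md: "min_degree e {e} = 1"
    unfolding min_degree_def by simp
  have "min_degree e {e} \<le> degeneracy V E"
    by (rule deg_le[OF g]) (use uv e in auto)
  thus ?thesis using md by simp
qed

lemma tri:
  assumes g: "graph V E"
  shows "W \<subseteq> V \<Longrightarrow> card (SS E W) \<le> 2 * degeneracy V E * card (EW E W)"
proof (induction "card W" arbitrary: W rule: less_induct)
  case less
  let ?D = "degeneracy V E"
  have fV: "finite V" using g graph_def by blast
  have fE: "finite E" using g graph_finE by blast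
  have fW: "finite W" using fV less.prems by (rule finite_subset[rotated])
  show ?case
  proof (cases "W = {}")
    case True
    hence "SS E W = {}" unfolding SS_def ZZ_def by auto
    thus ?thesis by simp
  next
    case False
    obtain w where w: "w \<in> W" "card {e\<in>EW E W. w \<in> e} \<le> ?D"
      using deg_low[OF g less.prems False] by blast
    define W' where "W' = W - {w}"
    define Nb where "Nb = {a\<in>W. {a,w}\<in>E}"
    define Fw where "Fw = {e\<in>EW E W. w \<in> e}"
    have cW': "card W' < card W" unfolding W'_def using w fW by (metis card_Diff1_less)
    have IH: "card (SS E W') \<le> 2 * ?D * card (EW E W')"
      using less.hyps[OF cW'] less.prems W'_def by blast
    have fNb: "finite Nb" unfolding Nb_def using fW by simp
    have nw: "w \<notin> Nb" unfolding Nb_def using graph_noloop[OF g] by blast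
    have Fw_img: "Fw = (\<lambda>a. {a,w}) ` Nb"
    proof
      show "Fw \<subseteq> (\<lambda>a. {a,w}) ` Nb"
      proof
        fix e assume e: "e \<in> Fw"
        hence eE: "e \<in> E" "e \<subseteq> W" "w \<in> e" unfolding Fw_def EW_def by auto
        obtain u v where uv: "u \<noteq> v" "e = {u,v}" using graph_edge[OF g eE(1)] by blast
        show "e \<in> (\<lambda>a. {a,w}) ` Nb"
        proof (cases "u = w")
          case True
          hence "e = {v,w}" using uv by auto
          moreover have "v \<in> Nb" unfolding Nb_def using eE uv True by (auto simp: insert_commute)
          ultimately show ?thesis by blast
        next
          case False
          hence "v = w" using eE uv by auto
          hence "e = {u,w}" using uv by auto
          moreover have "u \<in> Nb" unfolding Nb_def using eE uv \<open>e = {u,w}\<close> by auto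
          ultimately show ?thesis by blast
        qed
      qed
      show "(\<lambda>a. {a,w}) ` Nb \<subseteq> Fw" unfolding Fw_def Nb_def EW_def using w by auto
    qed
    have inj: "inj_on (\<lambda>a. {a,w}) Nb"
      unfolding inj_on_def using nw by (auto simp: doubleton_eq_iff)
    have cNb: "card Nb = card Fw" using Fw_img inj card_image by metis
    have cNbD: "card Nb \<le> ?D" using cNb w(2) Fw_def by simp
    have EWsplit: "EW E W = EW E W' \<union> Fw" unfolding EW_def Fw_def W'_def by auto
    have disj: "EW E W' \<inter> Fw = {}" unfolding EW_def Fw_def W'_def by auto
    have fEW: "finite (EW E W')" "finite Fw" unfolding EW_def Fw_def using fE by auto
    have cEW: "card (EW E W) = card (EW E W') + card Nb"
      using EWsplit disj fEW cNb by (simp add: card_Un_disjoint)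
    have sub: "SS E W \<subseteq> SS E W' \<union> ((\<lambda>(a,z). ({a,w},z)) ` (Nb \<times> Nb) \<union> (\<lambda>(a,b). ({a,b},w)) ` (Nb \<times> Nb))"
    proof
      fix p assume p: "p \<in> SS E W"
      obtain e z where ez: "p = (e,z)" by (cases p)
      have eE: "e \<in> E" "e \<subseteq> W" "z \<in> W" "\<forall>a\<in>e. {a,z}\<in>E"
        using p ez unfolding SS_def EW_def ZZ_def by auto
      show "p \<in> SS E W' \<union> ((\<lambda>(a,z). ({a,w},z)) ` (Nb \<times> Nb) \<union> (\<lambda>(a,b). ({a,b},w)) ` (Nb \<times> Nb))"
      proof (cases "w \<in> e")
        case True
        hence "e \<in> Fw" unfolding Fw_def EW_def using eE by auto
        then obtain a where a: "a \<in> Nb" "e = {a,w}" using Fw_img by auto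
        have "{w,z} \<in> E" using eE True by auto
        hence "z \<in> Nb" unfolding Nb_def using eE by (simp add: insert_commute)
        hence "p \<in> (\<lambda>(a,z). ({a,w},z)) ` (Nb \<times> Nb)" using a ez by (intro image_eqI[of _ _ "(a,z)"]) auto
        thus ?thesis by blast
      next
        case False
        show ?thesis
        proof (cases "z = w")
          case True
          obtain u v where uv: "u \<noteq> v" "e = {u,v}" using graph_edge[OF g eE(1)] by blast
          have "u \<in> Nb" "v \<in> Nb" unfolding Nb_def using eE uv True by auto
          hence "p \<in> (\<lambda>(a,b). ({a,b},w)) ` (Nb \<times> Nb)" using uv ez True by (intro image_eqI[of _ _ "(u,v)"]) auto
          thus ?thesis by blast
        next
          case False
          have "p \<in> SS E W'" using False \<open>w \<notin> e\<close> eE ez unfolding SS_def EW_def ZZ_def W'_def by auto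
          thus ?thesis by blast
        qed
      qed
    qed
    have fSS: "finite (SS E W')" unfolding SS_def EW_def ZZ_def using fE fW W'_def by auto
    have "card (SS E W) \<le> card (SS E W' \<union> ((\<lambda>(a,z). ({a,w},z)) ` (Nb \<times> Nb) \<union> (\<lambda>(a,b). ({a,b},w)) ` (Nb \<times> Nb)))"
      using sub fSS fNb by (intro card_mono) auto
    also have "\<dots> \<le> card (SS E W') + (card ((\<lambda>(a,z). ({a,w},z)) ` (Nb \<times> Nb)) + card ((\<lambda>(a,b). ({a,b},w)) ` (Nb \<times> Nb)))"
      by (meson add_mono card_Un_le le_trans order_refl)
    also have "\<dots> \<le> card (SS E W') + (card (Nb \<times> Nb) + card (Nb \<times> Nb))"
      by (intro add_mono card_image_le) (auto simp: fNb)
    also have "\<dots> = card (SS E W') + 2 * (card Nb * card Nb)" by (simp add: card_cartesian_product)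
    also have "\<dots> \<le> card (SS E W') + 2 * (?D * card Nb)" using cNbD by simp
    also have "\<dots> \<le> 2 * ?D * card (EW E W') + 2 * (?D * card Nb)" using IH by simp
    also have "\<dots> = 2 * ?D * card (EW E W)" using cEW by (simp add: algebra_simps)
    finally show ?thesis .
  qed
qed


definition INV :: "nat set set \<Rightarrow> nat set list \<Rightarrow> nat set list \<Rightarrow> bool" where
  "INV E Cs es \<longleftrightarrow> length es = length Cs \<and> distinct es \<and> set es \<subseteq> E \<and> (\<forall>l<length Cs. es!l \<subseteq> Cs!l)"

lemma la_inv:
  assumes "(la_step V E)\<^sup>*\<^sup>* Cs0 Cs" "INV E Cs0 es0"
  shows "\<exists>es. INV E Cs es"
  using assms(1)
proof (induction rule: rtranclp_induct)
  case base
  then show ?case using assms(2) by blast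
next
  case (step Cs Cs')
  obtain es where es: "INV E Cs es" using step.IH by blast
  obtain u v where unc: "uncovered E Cs u v" and
    cases: "(\<exists>l < length Cs. is_clique V E (Cs ! l \<union> {u, v}) \<and> Cs' = Cs[l := Cs ! l \<union> {u, v}])
      \<or> ((\<forall>l < length Cs. \<not> is_clique V E (Cs ! l \<union> {u, v})) \<and> Cs' = Cs @ [{u, v}])"
    using step.hyps(2) unfolding la_step_def by blast
  from cases show ?case
  proof
    assume "\<exists>l < length Cs. is_clique V E (Cs ! l \<union> {u, v}) \<and> Cs' = Cs[l := Cs ! l \<union> {u, v}]"
    then obtain l where l: "l < length Cs" "Cs' = Cs[l := Cs ! l \<union> {u, v}]" by blast
    have "INV E Cs' es" using es l unfolding INV_def by (auto simp: nth_list_update)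
    thus ?thesis by blast
  next
    assume "(\<forall>l < length Cs. \<not> is_clique V E (Cs ! l \<union> {u, v})) \<and> Cs' = Cs @ [{u, v}]"
    hence C': "Cs' = Cs @ [{u, v}]" by blast
    have nin: "{u,v} \<notin> set es"
    proof
      assume "{u,v} \<in> set es"
      then obtain i where i: "i < length es" "es!i = {u,v}" by (metis in_set_conv_nth)
      hence "{u,v} \<subseteq> Cs!i" "i < length Cs" using es unfolding INV_def by auto
      hence "Cs!i \<in> set Cs" "{u,v} \<subseteq> Cs!i" by auto
      thus False using unc unfolding uncovered_def by blast
    qed
    have "{u,v} \<in> E" using unc unfolding uncovered_def by blast
    hence "INV E Cs' (es @ [{u,v}])" using es nin C' unfolding INV_def by (auto simp: nth_append)
    thus ?thesis by blast
  qed
qed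

theorem mainTheorem15:
  shows "\<exists>c::real. \<forall>V E Cs. graph V E \<and> la_succinct_cover V E Cs \<longrightarrow>
     (\<Sum>v\<in>V. card (adm_set E Cs v)) = (\<Sum>l<length Cs. card (adm_dual V E Cs l))
     \<and> real (\<Sum>l<length Cs. card (adm_dual V E Cs l))
         \<le> c * real (min (length Cs * card V) (degeneracy V E * card E))"
proof (intro exI[of _ 4] allI impI)
  fix V E Cs assume a: "graph V E \<and> la_succinct_cover V E Cs"
  hence g: "graph V E" and la: "(la_step V E)\<^sup>*\<^sup>* [] Cs"
    unfolding la_succinct_cover_def by auto
  have fV: "finite V" using g by (rule graph_finV)
  have fE: "finite E" using g by (rule graph_finE)
  have "INV E [] []" unfolding INV_def by simp
  then obtain es where es: "INV E Cs es" using la_inv[OF la] by blast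
  let ?n = "length Cs"
  let ?P = "\<lambda>v l. Cs!l \<subseteq> cnbhd E v"
  let ?S = "\<Sum>l<length Cs. card (adm_dual V E Cs l)"
  let ?d = "degeneracy V E"
  have "(\<Sum>v\<in>V. card (adm_set E Cs v)) = (\<Sum>v\<in>V. \<Sum>l<?n. if ?P v l then 1 else 0)"
  proof (rule sum.cong[OF refl])
    fix v
    have "adm_set E Cs v = {l\<in>{..<?n}. ?P v l}" unfolding adm_set_def by auto
    thus "card (adm_set E Cs v) = (\<Sum>l<?n. if ?P v l then 1 else 0)"
      by (simp add: sum.inter_filter[symmetric])
  qed
  also have "\<dots> = (\<Sum>l<?n. \<Sum>v\<in>V. if ?P v l then 1 else 0)" by (rule sum.swap)
  also have "\<dots> = ?S"
  proof (rule sum.cong[OF refl])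
    fix l
    have "adm_dual V E Cs l = {v\<in>V. ?P v l}" unfolding adm_dual_def by auto
    thus "(\<Sum>v\<in>V. if ?P v l then 1 else 0) = card (adm_dual V E Cs l)"
      using fV by (simp add: sum.inter_filter[symmetric])
  qed
  finally have eq: "(\<Sum>v\<in>V. card (adm_set E Cs v)) = ?S" .
  have b1: "?S \<le> ?n * card V"
  proof -
    have "?S \<le> (\<Sum>l<?n. card V)"
      by (rule sum_mono, rule card_mono[OF fV]) (auto simp: adm_dual_def)
    thus ?thesis by simp
  qed
  have len: "length es = ?n" and dist: "distinct es" and sE: "set es \<subseteq> E"
    and sub: "\<forall>l<?n. es!l \<subseteq> Cs!l" using es unfolding INV_def by auto
  have nm: "?n \<le> card E" using len dist sE fE by (metis card_mono distinct_card)
  have Dl: "card (adm_dual V E Cs l) \<le> 2 + card (ZZ E V (es!l))" if l: "l < ?n" for l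
  proof -
    have eE: "es!l \<in> E" using l len sE nth_mem by (metis subsetD)
    obtain x y where xy: "x \<noteq> y" "es!l = {x,y}" using graph_edge[OF g eE] by blast
    have "adm_dual V E Cs l \<subseteq> es!l \<union> ZZ E V (es!l)"
    proof
      fix v assume v: "v \<in> adm_dual V E Cs l"
      hence vV: "v \<in> V" and c: "Cs!l \<subseteq> cnbhd E v" unfolding adm_dual_def by auto
      show "v \<in> es!l \<union> ZZ E V (es!l)"
      proof (cases "v \<in> es!l")
        case False
        have "\<forall>a\<in>es!l. {a,v} \<in> E"
        proof
          fix a assume "a \<in> es!l"
          hence "a \<in> cnbhd E v" "a \<noteq> v" using c sub l False by auto
          thus "{a,v} \<in> E" unfolding cnbhd_def nbhd_def by auto
        qed
        thus ?thesis using vV unfolding ZZ_def by auto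
      qed simp
    qed
    hence "card (adm_dual V E Cs l) \<le> card (es!l \<union> ZZ E V (es!l))"
      by (rule card_mono[rotated]) (auto simp: xy ZZ_def fV)
    also have "\<dots> \<le> card (es!l) + card (ZZ E V (es!l))" by (rule card_Un_le)
    also have "\<dots> \<le> 2 + card (ZZ E V (es!l))" using xy by simp
    finally show ?thesis .
  qed
  have b2: "?S \<le> 4 * ?d * card E"
  proof (cases "E = {}")
    case True
    hence "?n = 0" using nm fE by simp
    thus ?thesis by simp
  next
    case False
    then obtain e where "e \<in> E" by blast
    hence d1: "1 \<le> ?d" by (rule deg_pos[OF g])
    have "?S \<le> (\<Sum>l<?n. 2 + card (ZZ E V (es!l)))" by (rule sum_mono) (use Dl in auto)
    also have "\<dots> = 2 * ?n + (\<Sum>l<?n. card (ZZ E V (es!l)))" by (subst sum.distrib) simp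
    also have "(\<Sum>l<?n. card (ZZ E V (es!l))) = (\<Sum>e\<in>set es. card (ZZ E V e))"
    proof -
      have "(\<Sum>e\<in>set es. card (ZZ E V e)) = sum_list (map (\<lambda>e. card (ZZ E V e)) es)"
        using dist by (simp add: sum_list_distinct_conv_sum_set)
      also have "\<dots> = (\<Sum>l<length es. card (ZZ E V (es!l)))"
        by (simp add: sum_list_sum_nth atLeast0LessThan)
      finally show ?thesis using len by simp
    qed
    also have "(\<Sum>e\<in>set es. card (ZZ E V e)) \<le> (\<Sum>e\<in>E. card (ZZ E V e))"
      by (rule sum_mono2[OF fE sE]) simp
    also have "(\<Sum>e\<in>E. card (ZZ E V e)) = card (SS E V)"
    proof -
      have "EW E V = E" unfolding EW_def using g unfolding graph_def by fastforce
      moreover have "\<forall>e\<in>E. finite (ZZ E V e)" unfolding ZZ_def using fV by auto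
      ultimately show ?thesis unfolding SS_def using fE by (simp add: card_SigmaI)
    qed
    also have "card (SS E V) \<le> 2 * ?d * card (EW E V)" by (rule tri[OF g]) simp
    also have "EW E V = E" unfolding EW_def using g unfolding graph_def by fastforce
    finally have "?S \<le> 2 * ?n + 2 * ?d * card E" by simp
    moreover have "2 * ?n \<le> 2 * ?d * card E" using nm d1
      by (metis mult_le_mono mult_le_mono1 mult_1 mult.commute mult.left_commute le_trans order_refl)
    ultimately show ?thesis by linarith
  qed
  have "?S \<le> 4 * min (?n * card V) (?d * card E)" using b1 b2 by simp
  hence "real ?S \<le> real (4 * min (?n * card V) (?d * card E))" by (simp only: of_nat_le_iff)
  thus "(\<Sum>v\<in>V. card (adm_set E Cs v)) = ?S \<and> real ?S \<le> 4 * real (min (?n * card V) (?d * card E))"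
    using eq by simp
qed

end
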